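(* Let $\Lambda,\Delta\in\mathcal T_b$ satisfy $\Delta\cap\Lambda=\emptyset$, $\Delta\cap\Lambda_+=\emptyset$ and $\Lambda_-\cap\Delta_+=\emptyset$, let $\gamma_\Lambda,\gamma_\Delta$ be proper oriented kernels on $\Lambda$ and $\Delta$, and put $\Gamma=\Lambda\cup\Delta$. Then: (i) $\Gamma\in\mathcal T_b$, $\Gamma_+=\Lambda_+\cup(\Delta_+\setminus\Lambda)$ and $\Gamma_-=\Delta_-\cup(\Lambda_-\setminus\Delta)$; (ii) for every $A\in\mathcal F_{S\setminus\Gamma_+}$ the function $\gamma_\Lambda(A,\cdot)$ is $\mathcal F_{S\setminus\Delta_+}$-measurable, so that $\gamma_\Gamma(A,\omega):=\int\gamma_\Lambda(A,\sigma)\,\gamma_\Delta(d\sigma,\omega)$ is well defined, and $\gamma_\Gamma=\gamma_\Delta\gamma_\Lambda$ is a proper oriented kernel on $\Gamma$.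
   Context: $(S,\le)$ is a countable partially ordered set. For $x\in S$ write $x_-=\{y\in S:y<x\}$, $x_+=\{y\in S:y>x\}$. For $\Upsilon\subset S$: $\max(\Upsilon)=\{x\in\Upsilon: y\notin\Upsilon\text{ for all }y>x\}$, $\min(\Upsilon)=\{x\in\Upsilon: y\notin\Upsilon\text{ for all }y<x\}$, the past $\Upsilon_-=\{x\in S\setminus\Upsilon:\exists y\in\Upsilon,\ x<y\}$, the future $\Upsilon_+=\{x\in S\setminus\Upsilon:\exists y\in\Upsilon,\ x>y\}$, and the outer time $\Upsilon^*=\{x\in S: x\text{ is comparable with no }y\in\Upsilon\}$. Standing assumptions: for every $x\in S$, $\max(x_-)$ and $\min(x_+)$ are finite, every $y<x$ satisfies $y\le y_0<x$ for some $y_0\in\max(x_-)$, every $z>x$ satisfies $z\ge z_0>x$ for some $z_0\in\min(x_+)$; and $S$ has no minimal element. A finite set $\Lambda\subset S$ is a time box if $\Lambda_-\cap\Lambda_+=\emptyset$; $\mathcal T_b$ is the set of time boxes. $(E,\mathcal E)$ is a measurable space, $\Omega=E^S$ with product $\sigma$-algebra $\mathcal F$; $\mathcal F_\Upsilon$ is generated by coordinates in $\Upsilon$. A proper oriented kernel on $\Lambda\in\mathcal T_b$ is a map $\gamma_\Lambda:\mathcal F_{S\setminus\Lambda_+}\times\Omega\to[0,1]$ such that (a) $\gamma_\Lambda(\cdot,\omega)$ is a probability measure for each $\omega$; (b) $\gamma_\Lambda(A,\cdot)$ is $\mathcal F_{\Lambda_-\cup\Lambda^*}$-measurable for each $A\in\mathcal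 F_{S\setminus\Lambda_+}$; (c) $\gamma_\Lambda(A,\cdot)$ is $\mathcal F_{\Lambda_-}$-measurable for each $A\in\mathcal F_\Lambda$; (d) $\gamma_\Lambda(B,\omega)=\mathbf 1_B(\omega)$ for all $B\in\mathcal F_{\Lambda_-\cup\Lambda^*}$. *)

theory Defs
  imports "HOL-Probability.Probability"
begin

text \<open>The countable poset S is the type 's (S = UNIV) with its order.\<close>

definition lower :: "'s::order \<Rightarrow> 's set" where
  "lower x = {y. y < x}"

definition upper :: "'s::order \<Rightarrow> 's set" where
  "upper x = {y. y > x}"

definition maxset :: "'s::order set \<Rightarrow> 's set" where
  "maxset U = {x\<in>U. \<forall>y. y > x \<longrightarrow> y \<notin> U}"

definition minset :: "'s::order set \<Rightarrow> 's set" where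
  "minset U = {x\<in>U. \<forall>y. y < x \<longrightarrow> y \<notin> U}"

definition past :: "'s::order set \<Rightarrow> 's set" where
  "past U = {x. x \<notin> U \<and> (\<exists>y\<in>U. x < y)}"

definition future :: "'s::order set \<Rightarrow> 's set" where
  "future U = {x. x \<notin> U \<and> (\<exists>y\<in>U. x > y)}"

definition outer :: "'s::order set \<Rightarrow> 's set" where
  "outer U = {x. \<forall>y\<in>U. \<not> (x \<le> y) \<and> \<not> (y \<le> x)}"

definition standing_assms :: "'s::order itself \<Rightarrow> bool" where
  "standing_assms _ \<longleftrightarrow> countable (UNIV :: 's set) \<and>
     (\<forall>x::'s. finite (maxset (lower x)) \<and> finite (minset (upper x)) \<and>
        (\<forall>y. y < x \<longrightarrow> (\<exists>y0\<in>maxset (lower x). y \<le> y0)) \<and>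
        (\<forall>z. z > x \<longrightarrow> (\<exists>z0\<in>minset (upper x). z0 \<le> z))) \<and>
     (\<forall>x::'s. \<exists>y. y < x)"

definition time_box :: "'s::order set \<Rightarrow> bool" where
  "time_box L \<longleftrightarrow> finite L \<and> past L \<inter> future L = {}"

definition Omega :: "'e measure \<Rightarrow> ('s \<Rightarrow> 'e) set" where
  "Omega M = space (Pi\<^sub>M UNIV (\<lambda>_::'s. M))"

definition coord_sigma :: "'e measure \<Rightarrow> 's set \<Rightarrow> ('s \<Rightarrow> 'e) measure" where
  "coord_sigma M U = sigma (Omega M)
     {(\<lambda>\<omega>. \<omega> i) -` A \<inter> Omega M | i A. i \<in> U \<and> A \<in> sets M}"

definition proper_oriented_kernel ::
  "'e measure \<Rightarrow> 's::order set \<Rightarrow> (('s \<Rightarrow> 'e) set \<Rightarrow> ('s \<Rightarrow> 'e) \<Rightarrow> real) \<Rightarrow> bool" where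
  "proper_oriented_kernel M L \<gamma> \<longleftrightarrow>
     (\<forall>\<omega>\<in>Omega M. \<exists>P. prob_space P \<and> space P = Omega M \<and>
         sets P = sets (coord_sigma M (- future L)) \<and>
         (\<forall>A\<in>sets P. measure P A = \<gamma> A \<omega>)) \<and>
     (\<forall>A\<in>sets (coord_sigma M (- future L)).
         \<gamma> A \<in> borel_measurable (coord_sigma M (past L \<union> outer L))) \<and>
     (\<forall>A\<in>sets (coord_sigma M L). \<gamma> A \<in> borel_measurable (coord_sigma M (past L))) \<and>
     (\<forall>B\<in>sets (coord_sigma M (past L \<union> outer L)). \<forall>\<omega>\<in>Omega M. \<gamma> B \<omega> = indicator B \<omega>)"

definition kernel_measure ::
  "'e measure \<Rightarrow> 's::order set \<Rightarrow> (('s \<Rightarrow> 'e) set \<Rightarrow> ('s \<Rightarrow> 'e) \<Rightarrow> real) \<Rightarrow> ('s \<Rightarrow> 'e) \<Rightarrow> ('s \<Rightarrow> 'e) measure" where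
  "kernel_measure M L \<gamma> \<omega> = measure_of (Omega M) (sets (coord_sigma M (- future L))) (\<lambda>A. ennreal (\<gamma> A \<omega>))"

definition kernel_comp ::
  "'e measure \<Rightarrow> 's::order set \<Rightarrow> (('s \<Rightarrow> 'e) set \<Rightarrow> ('s \<Rightarrow> 'e) \<Rightarrow> real) \<Rightarrow>
   (('s \<Rightarrow> 'e) set \<Rightarrow> ('s \<Rightarrow> 'e) \<Rightarrow> real) \<Rightarrow> ('s \<Rightarrow> 'e) set \<Rightarrow> ('s \<Rightarrow> 'e) \<Rightarrow> real" where
  "kernel_comp M D \<gamma>D \<gamma>L A \<omega> = (\<integral>\<sigma>. \<gamma>L A \<sigma> \<partial>kernel_measure M D \<gamma>D \<omega>)"

end

theory Submission
  imports Defs "HOL-Probability.Conditional_Expectation"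
begin


definition gen :: "'e measure \<Rightarrow> 's set \<Rightarrow> ('s \<Rightarrow> 'e) set set" where
  "gen M U = {(\<lambda>\<omega>. \<omega> i) -` A \<inter> Omega M | i A. i \<in> U \<and> A \<in> sets M}"

lemma gen_Pow: "gen M U \<subseteq> Pow (Omega M)"
  unfolding gen_def by auto

lemma coord_sigma_gen: "coord_sigma M U = sigma (Omega M) (gen M U)"
  unfolding coord_sigma_def gen_def by simp

lemma space_coord[simp]: "space (coord_sigma M U) = Omega M"
  unfolding coord_sigma_gen by (simp add: space_measure_of_conv)

lemma sets_coord: "sets (coord_sigma M U) = sigma_sets (Omega M) (gen M U)"
  unfolding coord_sigma_gen using gen_Pow[of M U] by (rule sets_measure_of)

lemma gen_in: "i \<in> U \<Longrightarrow> A \<in> sets M \<Longrightarrow> (\<lambda>\<omega>. \<omega> i) -` A \<inter> Omega M \<in> sets (coord_sigma M U)"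
  unfolding sets_coord gen_def by (rule sigma_sets.Basic) auto

lemma coord_mono: "U \<subseteq> V \<Longrightarrow> sets (coord_sigma M U) \<subseteq> sets (coord_sigma M V)"
  unfolding sets_coord by (rule sigma_sets_mono') (auto simp: gen_def)

lemma subalg_coord: "U \<subseteq> V \<Longrightarrow> subalgebra (coord_sigma M V) (coord_sigma M U)"
  unfolding subalgebra_def using coord_mono[of U V M] by auto

lemma meas_mono: "U \<subseteq> V \<Longrightarrow> f \<in> measurable (coord_sigma M U) N \<Longrightarrow> f \<in> measurable (coord_sigma M V) N"
  by (rule measurable_from_subalg[OF subalg_coord])

lemma part: "(x::'s::order) \<notin> L \<Longrightarrow> x \<notin> future L \<Longrightarrow> x \<in> past L \<union> outer L"
  unfolding past_def future_def outer_def by (auto simp: order.order_iff_strict)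

lemma po_sub: "time_box L \<Longrightarrow> past L \<union> outer L \<subseteq> - future (L::'s::order set)"
  unfolding time_box_def past_def future_def outer_def by (auto simp: order.order_iff_strict)

lemma L_sub: "L \<subseteq> - future (L::'s::order set)"
  unfolding future_def by auto

lemma KM:
  assumes "proper_oriented_kernel M L \<gamma>" "\<omega> \<in> Omega M"
  shows "prob_space (kernel_measure M L \<gamma> \<omega>)"
    "sets (kernel_measure M L \<gamma> \<omega>) = sets (coord_sigma M (- future L))"
    "space (kernel_measure M L \<gamma> \<omega>) = Omega M"
    "\<And>A. A \<in> sets (coord_sigma M (- future L)) \<Longrightarrow> measure (kernel_measure M L \<gamma> \<omega>) A = \<gamma> A \<omega>"
proof -
  obtain P where P: "prob_space P" "space P = Omega M" "sets P = sets (coord_sigma M (- future L))"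
    "\<And>A. A \<in> sets P \<Longrightarrow> measure P A = \<gamma> A \<omega>"
    using assms unfolding proper_oriented_kernel_def by blast
  have "kernel_measure M L \<gamma> \<omega> = measure_of (space P) (sets P) (emeasure P)"
    unfolding kernel_measure_def P(2) P(3)[symmetric]
  proof (rule measure_of_eq)
    show "sets P \<subseteq> Pow (Omega M)" using sets.sets_into_space P(2) by blast
    fix a assume "a \<in> sigma_sets (Omega M) (sets P)"
    then have "a \<in> sets P" using sets.sigma_sets_eq P(2) by metis
    then show "ennreal (\<gamma> a \<omega>) = emeasure P a"
      using P by (simp add: finite_measure.emeasure_eq_measure prob_space.finite_measure)
  qed
  then have eq: "kernel_measure M L \<gamma> \<omega> = P" by (simp add: measure_of_of_measure)
  show "prob_space (kernel_measure M L \<gamma> \<omega>)"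
    "sets (kernel_measure M L \<gamma> \<omega>) = sets (coord_sigma M (- future L))"
    "space (kernel_measure M L \<gamma> \<omega>) = Omega M"
    "\<And>A. A \<in> sets (coord_sigma M (- future L)) \<Longrightarrow> measure (kernel_measure M L \<gamma> \<omega>) A = \<gamma> A \<omega>"
    using P eq by auto
qed

lemma prodrule:
  assumes tb: "time_box L" and k: "proper_oriented_kernel M L \<gamma>" and w: "\<omega> \<in> Omega M"
    and C: "C \<in> sets (coord_sigma M L)" and B: "B \<in> sets (coord_sigma M (past L \<union> outer L))"
  shows "\<gamma> (C \<inter> B) \<omega> = \<gamma> C \<omega> * indicator B \<omega>"
proof -
  let ?P = "kernel_measure M L \<gamma> \<omega>"
  interpret P: prob_space ?P using KM(1)[OF k w] .
  have sP: "sets ?P = sets (coord_sigma M (- future L))" using KM(2)[OF k w] .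
  have C': "C \<in> sets ?P" using coord_mono[OF L_sub] C sP by blast
  have B': "B \<in> sets ?P" using coord_mono[OF po_sub[OF tb]] B sP by blast
  have CB: "C \<inter> B \<in> sets ?P" using B' C' by blast
  have mB: "measure ?P B = indicator B \<omega>"
    using KM(4)[OF k w] B' sP k w B unfolding proper_oriented_kernel_def by metis
  have "measure ?P (C \<inter> B) = measure ?P C * indicator B \<omega>"
  proof (cases "\<omega> \<in> B")
    case True
    have "measure ?P (space ?P - B) = 0" using P.prob_compl[OF B'] mB True by simp
    moreover have "C - B \<subseteq> space ?P - B" using C' sets.sets_into_space by blast
    ultimately have "measure ?P (C - B) = 0"
      by (metis B' C' P.finite_measure_mono measure_nonneg antisym sets.Diff sets.top)
    moreover have "measure ?P C = measure ?P (C \<inter> B) + measure ?P (C - B)"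
      using B' C' P.finite_measure_Union[of "C \<inter> B" "C - B"] by (metis Int_Diff_Un Int_Diff_disjoint sets.Diff sets.Int)
    ultimately show ?thesis using True by simp
  next
    case False
    have "measure ?P (C \<inter> B) \<le> measure ?P B" using B' CB by (simp add: P.finite_measure_mono)
    then show ?thesis using False mB by (simp add: antisym)
  qed
  then show ?thesis using KM(4)[OF k w] CB C' sP by simp
qed

lemma lemR:
  fixes L V W :: "'s::order set" and M :: "'e measure"
  assumes tb: "time_box L" and k: "proper_oriented_kernel M L \<gamma>"
    and V: "V \<subseteq> - future L" and W1: "past L \<subseteq> W" and W2: "V - L \<subseteq> W"
  shows "(\<lambda>\<omega>. restr_to_subalg (kernel_measure M L \<gamma> \<omega>) (coord_sigma M V))
          \<in> measurable (coord_sigma M W) (subprob_algebra (coord_sigma M V))"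
proof -
  let ?K = "\<lambda>\<omega>. restr_to_subalg (kernel_measure M L \<gamma> \<omega>) (coord_sigma M V)"
  define G where "G = {C \<inter> B | C B. C \<in> sets (coord_sigma M (V \<inter> L)) \<and> B \<in> sets (coord_sigma M (V - L))}"
  have VLa: "V \<inter> L \<subseteq> V" "V - L \<subseteq> V" by auto
  have VL2: "V - L \<subseteq> past L \<union> outer L" using V part by blast
  have sub: "\<And>\<omega>::'s\<Rightarrow>'e. \<omega> \<in> Omega M \<Longrightarrow> subalgebra (kernel_measure M L \<gamma> \<omega>) (coord_sigma M V)"
    unfolding subalgebra_def using KM[OF k] coord_mono[OF V, of M] by auto
  have Ksets: "\<And>\<omega>::'s\<Rightarrow>'e. \<omega> \<in> Omega M \<Longrightarrow> sets (?K \<omega>) = sets (coord_sigma M V)"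
    using sub by (rule sets_restr_to_subalg)
  have Kem: "\<And>(\<omega>::'s\<Rightarrow>'e) A. \<omega> \<in> Omega M \<Longrightarrow> A \<in> sets (coord_sigma M V) \<Longrightarrow> emeasure (?K \<omega>) A = ennreal (\<gamma> A \<omega>)"
  proof -
    fix \<omega> :: "'s \<Rightarrow> 'e" and A assume w: "\<omega> \<in> Omega M" and A: "A \<in> sets (coord_sigma M V)"
    have A': "A \<in> sets (coord_sigma M (- future L))" using A coord_mono[OF V, of M] by blast
    interpret P: prob_space "kernel_measure M L \<gamma> \<omega>" using KM(1)[OF k w] .
    have "emeasure (?K \<omega>) A = emeasure (kernel_measure M L \<gamma> \<omega>) A"
      using emeasure_restr_to_subalg[OF sub[OF w]] A by blast
    also have "\<dots> = ennreal (\<gamma> A \<omega>)"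
      using KM(2,4)[OF k w] A' P.emeasure_eq_measure by simp
    finally show "emeasure (?K \<omega>) A = ennreal (\<gamma> A \<omega>)" .
  qed
  show ?thesis
  proof (rule measurable_subprob_algebra_generated[where G=G and \<Omega>="Omega M :: ('s \<Rightarrow> 'e) set"])
    show "sets (coord_sigma M V) = sigma_sets (Omega M) G"
    proof
      show "sets (coord_sigma M V) \<subseteq> sigma_sets (Omega M) G"
        unfolding sets_coord
      proof (rule sigma_sets_mono')
        show "gen M V \<subseteq> G"
        proof
          fix X assume "X \<in> gen M V"
          then obtain i A where X: "X = (\<lambda>\<omega>. \<omega> i) -` A \<inter> Omega M" "i \<in> V" "A \<in> sets M"
            unfolding gen_def by blast
          show "X \<in> G"
          proof (cases "i \<in> L")
            case True
            have "X \<in> sets (coord_sigma M (V \<inter> L))" using X True gen_in[of i "V \<inter> L" A M] by simp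
            moreover have "Omega M \<in> sets (coord_sigma M (V - L))"
              using sets.top[of "coord_sigma M (V - L)"] by (simp only: space_coord)
            moreover have "X = X \<inter> Omega M" using X by blast
            ultimately show ?thesis unfolding G_def by blast
          next
            case False
            have "X \<in> sets (coord_sigma M (V - L))" using X False gen_in[of i "V - L" A M] by simp
            moreover have "Omega M \<in> sets (coord_sigma M (V \<inter> L))"
              using sets.top[of "coord_sigma M (V \<inter> L)"] by (simp only: space_coord)
            moreover have "X = Omega M \<inter> X" using X by blast
            ultimately show ?thesis unfolding G_def by blast
          qed
        qed
      qed
      show "sigma_sets (Omega M) G \<subseteq> sets (coord_sigma M V)"
      proof (rule sigma_algebra.sigma_sets_subset)
        show "sigma_algebra (Omega M) (sets (coord_sigma M V))"
          using sets.sigma_algebra_axioms[of "coord_sigma M V"] by simp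
        show "G \<subseteq> sets (coord_sigma M V)"
          unfolding G_def using coord_mono[OF VLa(1), of M] coord_mono[OF VLa(2), of M] by blast
      qed
    qed
    show "Int_stable G"
      unfolding Int_stable_def G_def
    proof (intro ballI)
      fix a b assume "a \<in> {C \<inter> B |C B. C \<in> sets (coord_sigma M (V \<inter> L)) \<and> B \<in> sets (coord_sigma M (V - L))}"
        "b \<in> {C \<inter> B |C B. C \<in> sets (coord_sigma M (V \<inter> L)) \<and> B \<in> sets (coord_sigma M (V - L))}"
      then obtain C1 B1 C2 B2 where "a = C1 \<inter> B1" "b = C2 \<inter> B2"
        "C1 \<in> sets (coord_sigma M (V \<inter> L))" "B1 \<in> sets (coord_sigma M (V - L))"
        "C2 \<in> sets (coord_sigma M (V \<inter> L))" "B2 \<in> sets (coord_sigma M (V - L))" by blast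
      moreover have "a \<inter> b = (C1 \<inter> C2) \<inter> (B1 \<inter> B2)" using calculation by blast
      ultimately show "a \<inter> b \<in> {C \<inter> B |C B. C \<in> sets (coord_sigma M (V \<inter> L)) \<and> B \<in> sets (coord_sigma M (V - L))}"
        by blast
    qed
    show "G \<subseteq> Pow (Omega M)"
    proof
      fix X assume "X \<in> G"
      then obtain C B where "X = C \<inter> B" "C \<in> sets (coord_sigma M (V \<inter> L))" unfolding G_def by blast
      then show "X \<in> Pow (Omega M)" using sets.sets_into_space[of C "coord_sigma M (V \<inter> L)"] by auto
    qed
    fix a assume a: "a \<in> space (coord_sigma M W)"
    then have a': "a \<in> Omega M" by simp
    show "subprob_space (?K a)"
      using prob_space_restr_to_subalg[OF sub[OF a'] KM(1)[OF k a']] prob_space_imp_subprob_space by blast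
    show "sets (?K a) = sets (coord_sigma M V)" using Ksets a' .
  next
    fix A assume "A \<in> G"
    then obtain C B where A: "A = C \<inter> B" "C \<in> sets (coord_sigma M (V \<inter> L))" "B \<in> sets (coord_sigma M (V - L))"
      unfolding G_def by blast
    have C: "C \<in> sets (coord_sigma M L)" using A coord_mono[of "V \<inter> L" L M] by blast
    have B: "B \<in> sets (coord_sigma M (past L \<union> outer L))" using A coord_mono[OF VL2, of M] by blast
    have AV: "A \<in> sets (coord_sigma M V)" using A coord_mono[OF VLa(1), of M] coord_mono[OF VLa(2), of M] by blast
    have mC: "\<gamma> C \<in> borel_measurable (coord_sigma M W)"
      using k C meas_mono[OF W1] unfolding proper_oriented_kernel_def by blast
    have BW: "B \<in> sets (coord_sigma M W)" using A coord_mono[OF W2, of M] by blast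
    have "(\<lambda>a. ennreal (\<gamma> C a * indicator B a)) \<in> borel_measurable (coord_sigma M W)"
      using mC BW by (intro measurable_compose[OF _ measurable_ennreal] borel_measurable_times borel_measurable_indicator)
    then show "(\<lambda>a. emeasure (?K a) A) \<in> borel_measurable (coord_sigma M W)"
    proof (rule measurable_cong[THEN iffD1, rotated])
      fix w assume "w \<in> space (coord_sigma M W)"
      then have w: "w \<in> Omega M" by simp
      show "ennreal (\<gamma> C w * indicator B w) = emeasure (?K w) A"
        using Kem[OF w AV] prodrule[OF tb k w C B] A by simp
    qed
  next
    have "(\<lambda>a. 1::ennreal) \<in> borel_measurable (coord_sigma M W)" by simp
    then show "(\<lambda>a. emeasure (?K a) (Omega M)) \<in> borel_measurable (coord_sigma M W)"
    proof (rule measurable_cong[THEN iffD1, rotated])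
      fix w assume "w \<in> space (coord_sigma M W)"
      then have w: "w \<in> Omega M" by simp
      interpret Q: prob_space "?K w"
        using prob_space_restr_to_subalg[OF sub[OF w] KM(1)[OF k w]] .
      have "space (?K w) = Omega M" by (simp add: space_restr_to_subalg KM(3)[OF k w])
      then show "1 = emeasure (?K w) (Omega M)" using Q.emeasure_space_1 by simp
    qed
  qed
qed

lemma restr_measure:
  assumes k: "proper_oriented_kernel M L \<gamma>" and w: "\<omega> \<in> Omega M"
    and V: "V \<subseteq> - future L" and A: "A \<in> sets (coord_sigma M V)"
  shows "measure (restr_to_subalg (kernel_measure M L \<gamma> \<omega>) (coord_sigma M V)) A = \<gamma> A \<omega>"
proof -
  have sub: "subalgebra (kernel_measure M L \<gamma> \<omega>) (coord_sigma M V)"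
    unfolding subalgebra_def using KM[OF k w] coord_mono[OF V, of M] by auto
  have "A \<in> sets (coord_sigma M (- future L))" using A coord_mono[OF V, of M] by blast
  then show ?thesis using emeasure_restr_to_subalg[OF sub A] KM(4)[OF k w] unfolding measure_def by simp
qed

lemma lemR1:
  fixes L V W :: "'s::order set" and M :: "'e measure"
  assumes tb: "time_box L" and k: "proper_oriented_kernel M L \<gamma>"
    and V: "V \<subseteq> - future L" and W1: "past L \<subseteq> W" and W2: "V - L \<subseteq> W"
    and A: "A \<in> sets (coord_sigma M V)"
  shows "\<gamma> A \<in> borel_measurable (coord_sigma M W)"
proof -
  have "(\<lambda>\<omega>. measure (restr_to_subalg (kernel_measure M L \<gamma> \<omega>) (coord_sigma M V)) A) \<in> borel_measurable (coord_sigma M W)"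
    by (rule measurable_compose[OF lemR[OF tb k V W1 W2] measurable_measure_subprob_algebra[OF A]])
  then show ?thesis
    by (rule measurable_cong[THEN iffD1, rotated]) (simp add: restr_measure[OF k _ V A])
qed

lemma lemI:
  fixes L V W :: "'s::order set" and M :: "'e measure" and f :: "('s \<Rightarrow> 'e) \<Rightarrow> real"
  assumes tb: "time_box L" and k: "proper_oriented_kernel M L \<gamma>"
    and V: "V \<subseteq> - future L" and W1: "past L \<subseteq> W" and W2: "V - L \<subseteq> W"
    and f: "f \<in> borel_measurable (coord_sigma M V)"
  shows "(\<lambda>\<omega>. \<integral>\<sigma>. f \<sigma> \<partial>kernel_measure M L \<gamma> \<omega>) \<in> borel_measurable (coord_sigma M W)"
proof -
  have "(\<lambda>\<omega>. \<integral>\<sigma>. f \<sigma> \<partial>restr_to_subalg (kernel_measure M L \<gamma> \<omega>) (coord_sigma M V)) \<in> borel_measurable (coord_sigma M W)"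
    by (rule measurable_compose[OF lemR[OF tb k V W1 W2] integral_measurable_subprob_algebra[OF f]])
  then show ?thesis
  proof (rule measurable_cong[THEN iffD1, rotated])
    fix w assume "w \<in> space (coord_sigma M W)"
    then have w: "w \<in> Omega M" by simp
    have sub: "subalgebra (kernel_measure M L \<gamma> w) (coord_sigma M V)"
      unfolding subalgebra_def using KM[OF k w] coord_mono[OF V, of M] by auto
    show "(\<integral>\<sigma>. f \<sigma> \<partial>restr_to_subalg (kernel_measure M L \<gamma> w) (coord_sigma M V)) = (\<integral>\<sigma>. f \<sigma> \<partial>kernel_measure M L \<gamma> w)"
      by (rule integral_subalgebra2[OF sub f])
  qed
qed

context
  fixes L D :: "'s::order set"
  assumes t1: "time_box L" and t2: "time_box D"
    and h4: "D \<inter> L = {}" and h5: "D \<inter> future L = {}" and h6: "past L \<inter> future D = {}"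
begin
lemma S1: "future (L \<union> D) = future L \<union> (future D - L)"
  using h5 unfolding future_def by auto
lemma S0: "past D \<inter> L = {}"
proof -
  { fix x z assume x: "x \<in> L" "x < z" "z \<in> D"
    then have "z \<notin> L" using h4 by auto
    then have "z \<in> future L" using x unfolding future_def by auto
    then have False using h5 x by auto }
  then show ?thesis unfolding past_def by auto
qed
lemma S2: "past (L \<union> D) = past D \<union> (past L - D)"
  using S0 unfolding past_def by auto
lemma Sb: "past D \<inter> future L = {}"
  proof (rule ccontr)
    assume "past D \<inter> future L \<noteq> {}"
    then obtain x z y where "x \<notin> D" "z \<in> D" "x < z" "x \<notin> L" "y \<in> L" "y < x"
      unfolding past_def future_def by blast
    moreover have "z \<notin> L" using h4 calculation by blast
    ultimately have "z \<in> D \<inter> future L" unfolding future_def by (auto dest: order.strict_trans)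
    then show False using h5 by blast
  qed
lemma S3: "time_box (L \<union> D)"
proof -
  have a: "past L \<inter> future L = {}" "past D \<inter> future D = {}" using t1 t2 unfolding time_box_def by auto
  have b: "past D \<inter> future L = {}"
  proof (rule ccontr)
    assume "past D \<inter> future L \<noteq> {}"
    then obtain x z y where "x \<notin> D" "z \<in> D" "x < z" "x \<notin> L" "y \<in> L" "y < x"
      unfolding past_def future_def by blast
    moreover have "z \<notin> L" using h4 calculation by blast
    ultimately have "z \<in> D \<inter> future L" unfolding future_def by (auto dest: order.strict_trans)
    then show False using h5 by blast
  qed
  have "past (L \<union> D) \<inter> future (L \<union> D) = {}"
    unfolding S1 S2 using a b h6 by blast
  then show ?thesis using t1 t2 unfolding time_box_def by auto
qed
lemma S4: "past L \<union> (- future (L \<union> D) - L) \<subseteq> - future D"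
  unfolding S1 using h6 by blast
lemma partx: "(x::'s) \<notin> L \<union> D \<Longrightarrow> x \<notin> future (L \<union> D) \<Longrightarrow> x \<in> past (L \<union> D) \<union> outer (L \<union> D)"
  using part[of x "L \<union> D"] by blast
lemma S5: "past D \<union> ((past L \<union> (- future (L \<union> D) - L)) - D) \<subseteq> past (L \<union> D) \<union> outer (L \<union> D)"
  unfolding S2 using partx[unfolded S2] by blast
lemma S6: "- future (L \<union> D) \<subseteq> - future L"
  unfolding S1 by blast
lemma S7: "past L \<union> ((L \<union> D) - L) \<subseteq> - future D"
  using h6 unfolding future_def by blast
lemma S8: "past D \<union> ((past L \<union> ((L \<union> D) - L)) - D) \<subseteq> past (L \<union> D)"
  unfolding S2 by blast
lemma S9: "L \<union> D \<subseteq> - future L"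
  using h5 L_sub by blast
lemma S10: "past (L \<union> D) \<union> outer (L \<union> D) \<subseteq> past L \<union> outer L"
proof -
  have "past D \<subseteq> past L \<union> outer L" using S0 Sb part by blast
  moreover have "outer (L \<union> D) \<subseteq> outer L" unfolding outer_def by blast
  ultimately show ?thesis unfolding S2 by blast
qed
lemma S11: "past (L \<union> D) \<union> outer (L \<union> D) \<subseteq> past D \<union> outer D"
proof -
  have "past L - D \<subseteq> past D \<union> outer D" using h6 part by blast
  moreover have "outer (L \<union> D) \<subseteq> outer D" unfolding outer_def by blast
  ultimately show ?thesis unfolding S2 by blast
qed
lemma S12: "past L \<subseteq> - future D" using h6 by blast
lemma S13: "past D \<subseteq> past (L \<union> D) \<union> outer (L \<union> D)" "past D \<subseteq> past (L \<union> D)"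
  unfolding S2 by blast+
end

theorem mainTheorem16:
  fixes M :: "'e measure" and L D :: "'s::order set"
    and \<gamma>L \<gamma>D :: "('s \<Rightarrow> 'e) set \<Rightarrow> ('s \<Rightarrow> 'e) \<Rightarrow> real"
  assumes "standing_assms TYPE('s)"
    and "time_box L" and "time_box D"
    and "D \<inter> L = {}" and "D \<inter> future L = {}" and "past L \<inter> future D = {}"
    and "proper_oriented_kernel M L \<gamma>L" and "proper_oriented_kernel M D \<gamma>D"
  shows "time_box (L \<union> D) \<and>
         future (L \<union> D) = future L \<union> (future D - L) \<and>
         past (L \<union> D) = past D \<union> (past L - D) \<and>
         (\<forall>A\<in>sets (coord_sigma M (- future (L \<union> D))).
            \<gamma>L A \<in> borel_measurable (coord_sigma M (- future D))) \<and>
         proper_oriented_kernel M (L \<union> D) (kernel_comp M D \<gamma>D \<gamma>L)"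
proof -
  note h = assms(2-6)
  have tL: "time_box L" and tD: "time_box D" using assms by auto
  have kL: "proper_oriented_kernel M L \<gamma>L" and kD: "proper_oriented_kernel M D \<gamma>D" using assms by auto
  let ?G = "L \<union> D"
  let ?U = "past L \<union> (- future ?G - L)"
  have U1: "?U \<subseteq> - future D" using S4[OF h] .
  have mL: "\<And>A. A \<in> sets (coord_sigma M (- future ?G)) \<Longrightarrow> \<gamma>L A \<in> borel_measurable (coord_sigma M ?U)"
    by (rule lemR1[OF tL kL S6[OF h]]) auto
  have ii: "\<forall>A\<in>sets (coord_sigma M (- future ?G)). \<gamma>L A \<in> borel_measurable (coord_sigma M (- future D))"
    using mL meas_mono[OF U1] by blast
  have kc: "\<And>A. kernel_comp M D \<gamma>D \<gamma>L A = (\<lambda>\<omega>. \<integral>\<sigma>. \<gamma>L A \<sigma> \<partial>kernel_measure M D \<gamma>D \<omega>)"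
    unfolding kernel_comp_def by (rule ext) simp
  have pa: "\<forall>\<omega>\<in>Omega M. \<exists>P. prob_space P \<and> space P = Omega M \<and>
         sets P = sets (coord_sigma M (- future ?G)) \<and>
         (\<forall>A\<in>sets P. measure P A = kernel_comp M D \<gamma>D \<gamma>L A \<omega>)"
  proof
    fix \<omega> :: "'s \<Rightarrow> 'e" assume w: "\<omega> \<in> Omega M"
    let ?mu = "kernel_measure M D \<gamma>D \<omega>"
    let ?K = "\<lambda>\<sigma>. restr_to_subalg (kernel_measure M L \<gamma>L \<sigma>) (coord_sigma M (- future ?G))"
    interpret mu: prob_space ?mu using KM(1)[OF kD w] .
    have Kmeas0: "?K \<in> measurable (coord_sigma M (- future D)) (subprob_algebra (coord_sigma M (- future ?G)))"
      by (rule lemR[OF tL kL S6[OF h]]) (use S12[OF h] U1 in auto)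
    have Kmeas: "?K \<in> measurable ?mu (subprob_algebra (coord_sigma M (- future ?G)))"
      using Kmeas0 measurable_cong_sets[OF KM(2)[OF kD w] refl] by blast
    have spmu: "space ?mu = Omega M" using KM(3)[OF kD w] .
    have ne: "space ?mu \<noteq> {}" using w spmu by auto
    have subK: "\<And>\<sigma>. \<sigma> \<in> Omega M \<Longrightarrow> subalgebra (kernel_measure M L \<gamma>L \<sigma>) (coord_sigma M (- future ?G))"
      unfolding subalgebra_def using KM[OF kL] coord_mono[OF S6[OF h], of M] by auto
    have setsK: "\<And>\<sigma>. \<sigma> \<in> space ?mu \<Longrightarrow> sets (?K \<sigma>) = sets (coord_sigma M (- future ?G))"
      using subK spmu sets_restr_to_subalg by blast
    let ?P = "?mu \<bind> ?K"
    show "\<exists>P. prob_space P \<and> space P = Omega M \<and>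
         sets P = sets (coord_sigma M (- future ?G)) \<and>
         (\<forall>A\<in>sets P. measure P A = kernel_comp M D \<gamma>D \<gamma>L A \<omega>)"
    proof (intro exI conjI ballI)
      show "prob_space ?P"
      proof (rule mu.prob_space_bind[OF _ Kmeas])
        show "AE x in ?mu. prob_space (?K x)"
          using prob_space_restr_to_subalg[OF subK KM(1)[OF kL]] spmu by (intro AE_I2) auto
      qed
      show sP: "sets ?P = sets (coord_sigma M (- future ?G))"
        using sets_bind[OF setsK ne] by simp
      show "space ?P = Omega M"
        using space_bind[OF setsK ne] by simp
      fix A assume "A \<in> sets ?P"
      then have A: "A \<in> sets (coord_sigma M (- future ?G))" using sP by simp
      have "measure ?P A = (\<integral>\<sigma>. measure (?K \<sigma>) A \<partial>?mu)"
        by (rule mu.measure_bind[OF Kmeas A])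
      also have "\<dots> = (\<integral>\<sigma>. \<gamma>L A \<sigma> \<partial>?mu)"
        by (rule Bochner_Integration.integral_cong[OF refl]) (use restr_measure[OF kL _ S6[OF h] A] spmu in auto)
      finally show "measure ?P A = kernel_comp M D \<gamma>D \<gamma>L A \<omega>" by (simp add: kc)
    qed
  qed
  have pb: "\<forall>A\<in>sets (coord_sigma M (- future ?G)).
         kernel_comp M D \<gamma>D \<gamma>L A \<in> borel_measurable (coord_sigma M (past ?G \<union> outer ?G))"
  proof
    fix A assume A: "A \<in> sets (coord_sigma M (- future ?G))"
    show "kernel_comp M D \<gamma>D \<gamma>L A \<in> borel_measurable (coord_sigma M (past ?G \<union> outer ?G))"
      unfolding kc
      by (rule lemI[OF tD kD U1 _ _ mL[OF A]]) (use S13[OF h] S5[OF h] in auto)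
  qed
  have pc: "\<forall>A\<in>sets (coord_sigma M ?G).
         kernel_comp M D \<gamma>D \<gamma>L A \<in> borel_measurable (coord_sigma M (past ?G))"
  proof
    fix A assume A: "A \<in> sets (coord_sigma M ?G)"
    have A': "A \<in> sets (coord_sigma M (L \<union> D))" using A .
    have mA: "\<gamma>L A \<in> borel_measurable (coord_sigma M (past L \<union> (?G - L)))"
      by (rule lemR1[OF tL kL S9[OF h] _ _ A]) auto
    show "kernel_comp M D \<gamma>D \<gamma>L A \<in> borel_measurable (coord_sigma M (past ?G))"
      unfolding kc
      by (rule lemI[OF tD kD S7[OF h] _ _ mA]) (use S13[OF h] S8[OF h] in auto)
  qed
  have pd: "\<forall>B\<in>sets (coord_sigma M (past ?G \<union> outer ?G)). \<forall>\<omega>\<in>Omega M.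
       kernel_comp M D \<gamma>D \<gamma>L B \<omega> = indicator B \<omega>"
  proof (intro ballI)
    fix B and \<omega> :: "'s \<Rightarrow> 'e" assume B: "B \<in> sets (coord_sigma M (past ?G \<union> outer ?G))" and w: "\<omega> \<in> Omega M"
    let ?mu = "kernel_measure M D \<gamma>D \<omega>"
    interpret mu: prob_space ?mu using KM(1)[OF kD w] .
    have BL: "B \<in> sets (coord_sigma M (past L \<union> outer L))" using B coord_mono[OF S10[OF h], of M] by blast
    have BD: "B \<in> sets (coord_sigma M (past D \<union> outer D))" using B coord_mono[OF S11[OF h], of M] by blast
    have BD': "B \<in> sets (coord_sigma M (- future D))" using BD coord_mono[OF po_sub[OF tD], of M] by blast
    have Bmu: "B \<in> sets ?mu" using BD' KM(2)[OF kD w] by simp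
    have "kernel_comp M D \<gamma>D \<gamma>L B \<omega> = (\<integral>\<sigma>. indicator B \<sigma> \<partial>?mu)"
      unfolding kc
      by (rule Bochner_Integration.integral_cong[OF refl])
        (use kL BL KM(3)[OF kD w] in \<open>auto simp: proper_oriented_kernel_def\<close>)
    also have "\<dots> = measure ?mu B" using Bmu by simp
    also have "\<dots> = \<gamma>D B \<omega>" using KM(4)[OF kD w BD'] .
    also have "\<dots> = indicator B \<omega>" using kD BD w unfolding proper_oriented_kernel_def by blast
    finally show "kernel_comp M D \<gamma>D \<gamma>L B \<omega> = indicator B \<omega>" .
  qed
  have "proper_oriented_kernel M ?G (kernel_comp M D \<gamma>D \<gamma>L)"
    unfolding proper_oriented_kernel_def using pa pb pc pd by blast
  then show ?thesis using S3[OF h] S1[OF h] S2[OF h] ii by blast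
qed

end
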